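(* If a finite simple graph $G$ contains no co-triangle (no three pairwise non-adjacent vertices), then $G$ is perfectly divisible.
   Context: A graph is perfect if $\chi(F)=\omega(F)$ for every induced subgraph $F$ ($\chi$ chromatic number, $\omega$ clique number). A graph $G$ is perfectly divisible if every induced subgraph $F$ of $G$ contains a set $X$ of vertices such that $X$ meets every clique of $F$ of size $\omega(F)$ and $F[X]$ is perfect. *)

theory Defs
  imports Main
begin

text \<open>Induced subgraphs are given by vertex
  subsets F of V (with the restricted relation E).\<close>

definition simple_graph :: "'a set \<Rightarrow> ('a \<Rightarrow> 'a \<Rightarrow> bool) \<Rightarrow> bool" where
  "simple_graph V E \<longleftrightarrow> finite V \<and> (\<forall>x\<in>V. \<forall>y\<in>V. E x y \<longrightarrow> E y x) \<and> (\<forall>x\<in>V. \<not> E x x)"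

definition clique :: "('a \<Rightarrow> 'a \<Rightarrow> bool) \<Rightarrow> 'a set \<Rightarrow> bool" where
  "clique E K \<longleftrightarrow> (\<forall>x\<in>K. \<forall>y\<in>K. x \<noteq> y \<longrightarrow> E x y)"

definition clique_number :: "('a \<Rightarrow> 'a \<Rightarrow> bool) \<Rightarrow> 'a set \<Rightarrow> nat" where
  "clique_number E F = Max {card K | K. K \<subseteq> F \<and> clique E K}"

definition proper_colouring :: "('a \<Rightarrow> 'a \<Rightarrow> bool) \<Rightarrow> 'a set \<Rightarrow> nat \<Rightarrow> ('a \<Rightarrow> nat) \<Rightarrow> bool" where
  "proper_colouring E F k c \<longleftrightarrow> (\<forall>x\<in>F. c x < k) \<and> (\<forall>x\<in>F. \<forall>y\<in>F. E x y \<longrightarrow> c x \<noteq> c y)"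

definition chromatic_number :: "('a \<Rightarrow> 'a \<Rightarrow> bool) \<Rightarrow> 'a set \<Rightarrow> nat" where
  "chromatic_number E F = (LEAST k. \<exists>c. proper_colouring E F k c)"

definition perfect :: "('a \<Rightarrow> 'a \<Rightarrow> bool) \<Rightarrow> 'a set \<Rightarrow> bool" where
  "perfect E X \<longleftrightarrow> (\<forall>F\<subseteq>X. chromatic_number E F = clique_number E F)"

definition perfectly_divisible :: "('a \<Rightarrow> 'a \<Rightarrow> bool) \<Rightarrow> 'a set \<Rightarrow> bool" where
  "perfectly_divisible E V \<longleftrightarrow>
     (\<forall>F\<subseteq>V. F \<noteq> {} \<longrightarrow>
        (\<exists>X\<subseteq>F. (\<forall>K\<subseteq>F. clique E K \<and> card K = clique_number E F \<longrightarrow> K \<inter> X \<noteq> {})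
                 \<and> perfect E X))"

definition has_cotriangle :: "'a set \<Rightarrow> ('a \<Rightarrow> 'a \<Rightarrow> bool) \<Rightarrow> bool" where
  "has_cotriangle V E \<longleftrightarrow> (\<exists>x\<in>V. \<exists>y\<in>V. \<exists>z\<in>V. x \<noteq> y \<and> y \<noteq> z \<and> x \<noteq> z \<and>
      \<not> E x y \<and> \<not> E y z \<and> \<not> E x z)"

end

theory Submission
  imports Defs
begin

lemma cn_fin: "finite F \<Longrightarrow> finite {card K | K. K \<subseteq> F \<and> clique E K}"
proof -
  assume "finite F"
  have "{card K | K. K \<subseteq> F \<and> clique E K} \<subseteq> card ` Pow F" by auto
  moreover have "finite (card ` Pow F)" using \<open>finite F\<close> by simp
  ultimately show ?thesis by (rule finite_subset)
qed

lemma L1: "finite F \<Longrightarrow> K \<subseteq> F \<Longrightarrow> clique E K \<Longrightarrow> card K \<le> clique_number E F"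
  unfolding clique_number_def by (rule Max_ge) (auto simp: cn_fin)

lemma L2: "finite F \<Longrightarrow> \<exists>K\<subseteq>F. clique E K \<and> card K = clique_number E F"
proof -
  assume f: "finite F"
  define S where "S = {card K | K. K \<subseteq> F \<and> clique E K}"
  have "0 \<in> S" unfolding S_def
    by (rule CollectI, rule exI[of _ "{}"]) (simp add: clique_def)
  then have ne: "S \<noteq> {}" by (metis empty_iff)
  have fin: "finite S" unfolding S_def using f by (rule cn_fin)
  have "Max S \<in> S" using Max_in[OF fin ne] .
  moreover have "clique_number E F = Max S" unfolding clique_number_def S_def ..
  ultimately have "clique_number E F \<in> S" by simp
  then obtain K where "clique_number E F = card K" "K \<subseteq> F" "clique E K" unfolding S_def by blast
  then show ?thesis by metis
qed

lemma L3: "finite F \<Longrightarrow> proper_colouring E F k c \<Longrightarrow> clique_number E F \<le> k"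
proof -
  assume f: "finite F" and p: "proper_colouring E F k c"
  obtain K where K: "K \<subseteq> F" "clique E K" "card K = clique_number E F" using L2[OF f] by blast
  have "inj_on c K"
  proof (rule inj_onI)
    fix x y assume xy: "x \<in> K" "y \<in> K" "c x = c y"
    show "x = y"
    proof (rule ccontr)
      assume "x \<noteq> y"
      then have "E x y" using xy K(2) unfolding clique_def by auto
      moreover have "x \<in> F" "y \<in> F" using xy K(1) by auto
      ultimately have "c x \<noteq> c y" using p unfolding proper_colouring_def by auto
      then show False using xy by simp
    qed
  qed
  moreover have "c ` K \<subseteq> {..<k}"
  proof
    fix z assume "z \<in> c ` K"
    then obtain x where "x \<in> K" "z = c x" by blast
    then have "x \<in> F" using K(1) by blast
    then have "c x < k" using p unfolding proper_colouring_def by blast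
    then show "z \<in> {..<k}" using \<open>z = c x\<close> by simp
  qed
  moreover have "finite {..<k}" by simp
  ultimately have "card K \<le> card {..<k}" by (rule card_inj_on_le)
  then have "card K \<le> k" by simp
  then show ?thesis using K(3) by simp
qed

lemma L4: "finite F \<Longrightarrow> proper_colouring E F k c \<Longrightarrow> k \<le> clique_number E F
  \<Longrightarrow> chromatic_number E F = clique_number E F"
proof -
  assume f: "finite F" and p: "proper_colouring E F k c" and k: "k \<le> clique_number E F"
  have e: "\<exists>c. proper_colouring E F k c" using p by blast
  have "chromatic_number E F \<le> k" unfolding chromatic_number_def
    by (rule Least_le[where P="\<lambda>k. \<exists>c. proper_colouring E F k c"]) (rule e)
  moreover have "\<exists>c. proper_colouring E F (chromatic_number E F) c"
    unfolding chromatic_number_def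
    by (rule LeastI_ex[where P="\<lambda>k. \<exists>c. proper_colouring E F k c"]) (rule exI[of _ k], rule e)
  then obtain c' where "proper_colouring E F (chromatic_number E F) c'" by (elim exE)
  then have "clique_number E F \<le> chromatic_number E F" by (rule L3[OF f])
  ultimately show ?thesis using k by (rule_tac antisym) simp_all
qed

lemma aux:
  assumes f: "finite F'" and C: "clique E (F' - {v})"
    and nv: "\<forall>x\<in>F' - {v}. \<not> E v x \<and> \<not> E x v" and irr: "\<forall>x\<in>F'. \<not> E x x"
  shows "chromatic_number E F' = clique_number E F'"
proof (cases "F' = {}")
  case True
  have "proper_colouring E F' 0 (\<lambda>_. 0)" using True by (simp add: proper_colouring_def)
  moreover have "(0::nat) \<le> clique_number E F'" by simp
  ultimately show ?thesis by (rule L4[OF f])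
next
  case False
  define C where "C = F' - {v}"
  have fc: "finite C" unfolding C_def using f by simp
  obtain h where h: "bij_betw h C {0..<card C}" using ex_bij_betw_finite_nat[OF fc] by blast
  define c where "c x = (if x = v then 0 else h x)" for x
  have p: "proper_colouring E F' (max 1 (card C)) c"
    unfolding proper_colouring_def
  proof safe
    fix x assume "x \<in> F'"
    show "c x < max 1 (card C)"
    proof (cases "x = v")
      case False
      then have "h x \<in> h ` C" using \<open>x \<in> F'\<close> C_def by auto
      then have "h x < card C" using h unfolding bij_betw_def by auto
      then show ?thesis using False c_def by simp
    qed (simp add: c_def)
  next
    fix x y assume xy: "x \<in> F'" "y \<in> F'" "E x y" "c x = c y"
    have xv: "x \<noteq> v"
    proof
      assume "x = v"
      moreover have "y \<noteq> v" using xy(3) irr xy(2) \<open>x = v\<close> by auto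
      ultimately show False using nv xy(2,3) by auto
    qed
    have yv: "y \<noteq> v"
    proof
      assume "y = v"
      then show False using nv xy(1,3) xv by auto
    qed
    have "x \<noteq> y" using xy(1,3) irr by auto
    moreover have "x \<in> C" "y \<in> C" using xv yv xy(1,2) C_def by auto
    moreover have "inj_on h C" using h by (simp add: bij_betw_def)
    moreover have "h x = h y" using xy(4) xv yv by (simp add: c_def)
    ultimately show False by (meson inj_onD)
  qed
  obtain x where x: "x \<in> F'" using False by blast
  have "{x} \<subseteq> F'" using x by simp
  moreover have "clique E {x}" by (simp add: clique_def)
  ultimately have c1: "card {x} \<le> clique_number E F'" by (rule L1[OF f])
  have "C \<subseteq> F'" unfolding C_def by blast
  moreover have "clique E C" unfolding C_def by (rule C)
  ultimately have c2: "card C \<le> clique_number E F'" by (rule L1[OF f])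
  have "max 1 (card C) \<le> clique_number E F'" using c1 c2 by simp
  then show ?thesis by (rule L4[OF f p])
qed

theorem mainTheorem12:
  fixes V :: "'a set" and E :: "'a \<Rightarrow> 'a \<Rightarrow> bool"
  assumes "simple_graph V E"
    and "\<not> has_cotriangle V E"
  shows "perfectly_divisible E V"
  unfolding perfectly_divisible_def
proof (intro allI impI)
  fix F assume FV: "F \<subseteq> V" and ne: "F \<noteq> {}"
  have finV: "finite V" and sym: "\<forall>x\<in>V. \<forall>y\<in>V. E x y \<longrightarrow> E y x" and irr: "\<forall>x\<in>V. \<not> E x x"
    using assms(1) unfolding simple_graph_def by auto
  have fF: "finite F" using finite_subset[OF FV finV] .
  obtain v where v: "v \<in> F" using ne by blast
  define N where "N = {x\<in>F. x \<noteq> v \<and> \<not> E v x}"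
  define X where "X = insert v N"
  have Ncl: "clique E N" unfolding clique_def
  proof (intro ballI impI)
    fix x y assume "x \<in> N" "y \<in> N" "x \<noteq> y"
    note xy = this
    show "E x y"
    proof (rule ccontr)
      assume nxy: "\<not> E x y"
      have xV: "x \<in> V" and yV: "y \<in> V" and vV: "v \<in> V" using xy FV v unfolding N_def by auto
      have h: "v \<noteq> x" "v \<noteq> y" "\<not> E v x" "\<not> E v y" using xy unfolding N_def by auto
      have "has_cotriangle V E" unfolding has_cotriangle_def
        using xV yV vV h nxy \<open>x \<noteq> y\<close> by blast
      then show False using assms(2) by simp
    qed
  qed
  have meet: "\<forall>K\<subseteq>F. clique E K \<and> card K = clique_number E F \<longrightarrow> K \<inter> X \<noteq> {}"
  proof (intro allI impI)
    fix K assume K: "K \<subseteq> F" "clique E K \<and> card K = clique_number E F"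
    show "K \<inter> X \<noteq> {}"
    proof
      assume d: "K \<inter> X = {}"
      then have vK: "v \<notin> K" and adj: "\<forall>x\<in>K. E v x" unfolding X_def N_def using K by auto
      have "clique E (insert v K)" unfolding clique_def
      proof (intro ballI impI)
        fix a b assume ab: "a \<in> insert v K" "b \<in> insert v K" "a \<noteq> b"
        show "E a b"
        proof (cases "a = v")
          case True then show ?thesis using ab adj by auto
        next
          case False
          then have aK: "a \<in> K" using ab by auto
          show ?thesis
          proof (cases "b = v")
            case True
            have "E v a" using adj aK by auto
            moreover have "a \<in> V" "v \<in> V" using aK K(1) FV v by auto
            ultimately show ?thesis using sym True by auto
          next
            case False
            then have "b \<in> K" using ab by auto
            then show ?thesis using aK ab K(2) unfolding clique_def by auto
          qed
        qed
      qed
      then have "card (insert v K) \<le> clique_number E F" using K v fF by (intro L1) auto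
      moreover have "card (insert v K) = Suc (card K)" using vK finite_subset[OF K(1) fF] by simp
      ultimately show False using K by simp
    qed
  qed
  have "perfect E X" unfolding perfect_def
  proof (intro allI impI)
    fix F' assume F': "F' \<subseteq> X"
    have "F' \<subseteq> F" using F' v unfolding X_def N_def by auto
    show "chromatic_number E F' = clique_number E F'"
    proof (rule aux)
      show "finite F'" using finite_subset[OF \<open>F' \<subseteq> F\<close> fF] .
      show "clique E (F' - {v})" using Ncl F' unfolding X_def clique_def by blast
      show "\<forall>x\<in>F' - {v}. \<not> E v x \<and> \<not> E x v"
      proof
        fix x assume x: "x \<in> F' - {v}"
        then have nvx: "\<not> E v x" using F' unfolding X_def N_def by auto
        have "x \<in> V" "v \<in> V" using x \<open>F' \<subseteq> F\<close> FV v by auto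
        then have "\<not> E x v" using nvx sym by auto
        then show "\<not> E v x \<and> \<not> E x v" using nvx by simp
      qed
      show "\<forall>x\<in>F'. \<not> E x x" using irr FV \<open>F' \<subseteq> F\<close> by auto
    qed
  qed
  moreover have "X \<subseteq> F" using v unfolding X_def N_def by auto
  ultimately show "\<exists>X\<subseteq>F. (\<forall>K\<subseteq>F. clique E K \<and> card K = clique_number E F \<longrightarrow> K \<inter> X \<noteq> {}) \<and> perfect E X"
    using meet by (intro exI[of _ X]) simp
qed

end
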